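(* The number of $n$-dimensional Matoušek-type USOs is $2^{\Theta(n^2)}$.
   Context: All vectors and matrices are over $GF(2)$; $\oplus$ denotes xor. An orientation of the $n$-dimensional hypercube $\{0,1\}^n$ is given by an outmap $o:\{0,1\}^n\to\{0,1\}^n$, the edge $\{v,v\oplus e_i\}$ being directed away from $v$ iff $o(v)_i=1$. An $n$-dimensional Matoušek-type USO is an orientation of the form $o(v)=M(v\oplus s)$ for all $v$, where $M=PAP^T$ for some permutation matrix $P$ and some invertible upper-triangular matrix $A\in\{0,1\}^{n\times n}$, and $s\in\{0,1\}^n$. Two Matoušek-type USOs are counted as different iff their outmap functions differ. *)

theory Defs
  imports Main "HOL-Library.FuncSet" "HOL-Library.Landau_Symbols"
begin

text \<open>Vectors in GF(2)^n are functions nat => bool that vanish (are False) outside {0..<n};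
  n x n matrices over GF(2) are functions nat => nat => bool, only entries with indices < n matter.
  xor is (\<noteq>) on bool, and a sum over GF(2) is the parity of the number of true terms.\<close>

definition cube :: "nat \<Rightarrow> (nat \<Rightarrow> bool) set" where
  "cube n = {v. \<forall>i. n \<le> i \<longrightarrow> \<not> v i}"

definition vxor :: "(nat \<Rightarrow> bool) \<Rightarrow> (nat \<Rightarrow> bool) \<Rightarrow> (nat \<Rightarrow> bool)" where
  "vxor v w = (\<lambda>i. v i \<noteq> w i)"

definition matvec :: "nat \<Rightarrow> (nat \<Rightarrow> nat \<Rightarrow> bool) \<Rightarrow> (nat \<Rightarrow> bool) \<Rightarrow> (nat \<Rightarrow> bool)" where
  "matvec n M v = (\<lambda>i. i < n \<and> odd (card {j. j < n \<and> M i j \<and> v j}))"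

definition matmul :: "nat \<Rightarrow> (nat \<Rightarrow> nat \<Rightarrow> bool) \<Rightarrow> (nat \<Rightarrow> nat \<Rightarrow> bool) \<Rightarrow> (nat \<Rightarrow> nat \<Rightarrow> bool)" where
  "matmul n A B = (\<lambda>i j. odd (card {k. k < n \<and> A i k \<and> B k j}))"

definition transp_mat :: "(nat \<Rightarrow> nat \<Rightarrow> bool) \<Rightarrow> (nat \<Rightarrow> nat \<Rightarrow> bool)" where
  "transp_mat P = (\<lambda>i j. P j i)"

definition perm_matrix :: "nat \<Rightarrow> (nat \<Rightarrow> nat \<Rightarrow> bool) \<Rightarrow> bool" where
  "perm_matrix n P \<longleftrightarrow>
     (\<forall>i<n. \<exists>!j. j < n \<and> P i j) \<and> (\<forall>j<n. \<exists>!i. i < n \<and> P i j)"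

definition invertible_mat :: "nat \<Rightarrow> (nat \<Rightarrow> nat \<Rightarrow> bool) \<Rightarrow> bool" where
  "invertible_mat n A \<longleftrightarrow> (\<exists>B. \<forall>i<n. \<forall>j<n.
     matmul n A B i j = (i = j) \<and> matmul n B A i j = (i = j))"

definition upper_triangular :: "nat \<Rightarrow> (nat \<Rightarrow> nat \<Rightarrow> bool) \<Rightarrow> bool" where
  "upper_triangular n A \<longleftrightarrow> (\<forall>i<n. \<forall>j<n. j < i \<longrightarrow> \<not> A i j)"

definition matousek_outmap ::
  "nat \<Rightarrow> (nat \<Rightarrow> nat \<Rightarrow> bool) \<Rightarrow> (nat \<Rightarrow> bool) \<Rightarrow> (nat \<Rightarrow> bool) \<Rightarrow> (nat \<Rightarrow> bool)" where
  "matousek_outmap n M s = restrict (\<lambda>v. matvec n M (vxor v s)) (cube n)"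

definition matousek_usos :: "nat \<Rightarrow> ((nat \<Rightarrow> bool) \<Rightarrow> (nat \<Rightarrow> bool)) set" where
  "matousek_usos n = {matousek_outmap n (matmul n (matmul n P A) (transp_mat P)) s | P A s.
      perm_matrix n P \<and> upper_triangular n A \<and> invertible_mat n A \<and> s \<in> cube n}"

end

theory Submission
  imports Defs
begin

lemma matvec_cong:
  assumes "\<forall>i<n. \<forall>j<n. M i j = M' i j"
  shows "matvec n M v = matvec n M' v"
  unfolding matvec_def
proof (rule ext)
  fix i
  show "(i < n \<and> odd (card {j. j < n \<and> M i j \<and> v j})) =
        (i < n \<and> odd (card {j. j < n \<and> M' i j \<and> v j}))"
  proof (cases "i < n")
    case True
    then have "{j. j < n \<and> M i j \<and> v j} = {j. j < n \<and> M' i j \<and> v j}"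
      using assms by auto
    then show ?thesis by simp
  qed simp
qed

lemma outmap_cong:
  assumes "\<forall>i<n. \<forall>j<n. M i j = M' i j"
  shows "matousek_outmap n M s = matousek_outmap n M' s"
  unfolding matousek_outmap_def using matvec_cong[OF assms] by simp

lemma usos_subset:
  "matousek_usos n \<subseteq> (\<lambda>(X,Y). matousek_outmap n (\<lambda>i j. (i,j)\<in>X) (\<lambda>i. i\<in>Y)) `
     (Pow ({..<n}\<times>{..<n}) \<times> Pow {..<n})"
proof
  fix f assume "f \<in> matousek_usos n"
  then obtain M s where f: "f = matousek_outmap n M s" and s: "s \<in> cube n"
    unfolding matousek_usos_def by blast
  define X where "X = {(i,j). i<n \<and> j<n \<and> M i j}"
  define Y where "Y = {i. s i}"
  have Y: "Y \<subseteq> {..<n}" using s unfolding Y_def cube_def by (auto simp: not_le[symmetric])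
  have sY: "(\<lambda>i. i\<in>Y) = s" unfolding Y_def by auto
  have "f = matousek_outmap n (\<lambda>i j. (i,j)\<in>X) (\<lambda>i. i\<in>Y)"
    unfolding f sY by (rule outmap_cong) (auto simp: X_def)
  moreover have "(X,Y) \<in> Pow ({..<n}\<times>{..<n}) \<times> Pow {..<n}" using Y by (auto simp: X_def)
  ultimately show "f \<in> (\<lambda>(X,Y). matousek_outmap n (\<lambda>i j. (i,j)\<in>X) (\<lambda>i. i\<in>Y)) `
     (Pow ({..<n}\<times>{..<n}) \<times> Pow {..<n})" by force
qed

lemma usos_finite: "finite (matousek_usos n)"
  by (rule finite_subset[OF usos_subset]) auto

lemma usos_upper: "card (matousek_usos n) \<le> 2 ^ (n*n) * 2 ^ n"
proof -
  have "card (matousek_usos n) \<le> card ((\<lambda>(X,Y). matousek_outmap n (\<lambda>i j. (i,j)\<in>X) (\<lambda>i. i\<in>Y)) `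
     (Pow ({..<n}\<times>{..<n}) \<times> Pow {..<n}))"
    by (rule card_mono[OF _ usos_subset]) auto
  also have "\<dots> \<le> card (Pow ({..<n}\<times>{..<n}) \<times> Pow {..<n})"
    by (rule card_image_le) auto
  also have "\<dots> = 2 ^ (n*n) * 2 ^ n"
    by (simp add: card_cartesian_product card_Pow)
  finally show ?thesis .
qed

definition Am :: "nat \<Rightarrow> (nat \<times> nat) set \<Rightarrow> nat \<Rightarrow> nat \<Rightarrow> bool" where
  "Am n X = (\<lambda>i j. i = j \<or> (i < n div 2 \<and> n div 2 \<le> j \<and> (i,j) \<in> X))"

lemma Am_square:
  assumes "i < n" "j < n"
  shows "matmul n (Am n X) (Am n X) i j = (i = j)"
proof -
  let ?S = "{k. k < n \<and> Am n X i k \<and> Am n X k j}"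
  show ?thesis
  proof (cases "i = j")
    case True
    then have S: "?S = {i}" using assms by (auto simp: Am_def)
    show ?thesis by (subst matmul_def) (simp only: S, simp add: True)
  next
    case False
    show ?thesis
    proof (cases "i < n div 2 \<and> n div 2 \<le> j \<and> (i,j) \<in> X")
      case True
      then have S: "?S = {i,j}" using assms False by (auto simp: Am_def)
      show ?thesis using False by (subst matmul_def) (simp only: S, simp)
    next
      case F2: False
      then have S: "?S = {}" using assms False by (auto simp: Am_def)
      show ?thesis using False by (subst matmul_def) (simp only: S, simp)
    qed
  qed
qed

lemma id_conj:
  assumes "i < n" "j < n"
  shows "matmul n (matmul n (\<lambda>i j. i = j) A) (transp_mat (\<lambda>i j. i = j)) i j = A i j"
proof -
  have 1: "matmul n (\<lambda>i j. i = j) A i' j' = A i' j'" if "i' < n" for i' j'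
  proof (cases "A i' j'")
    case True
    then have S: "{k. k < n \<and> i' = k \<and> A k j'} = {i'}" using that by auto
    show ?thesis by (subst matmul_def) (simp only: S, simp add: True)
  next
    case False
    then have S: "{k. k < n \<and> i' = k \<and> A k j'} = {}" using that by auto
    show ?thesis using False by (subst matmul_def) (simp only: S, simp)
  qed
  show ?thesis
  proof (cases "A i j")
    case True
    then have S: "{k. k < n \<and> matmul n (\<lambda>i j. i = j) A i k \<and> transp_mat (\<lambda>i j. i = j) k j} = {j}"
      using assms 1 by (auto simp: transp_mat_def)
    show ?thesis by (subst matmul_def) (simp only: S, simp add: True)
  next
    case False
    then have S: "{k. k < n \<and> matmul n (\<lambda>i j. i = j) A i k \<and> transp_mat (\<lambda>i j. i = j) k j} = {}"
      using assms 1 by (auto simp: transp_mat_def)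
    show ?thesis using False by (subst matmul_def) (simp only: S, simp)
  qed
qed

lemma Am_in: "matousek_outmap n (Am n X) (\<lambda>_. False) \<in> matousek_usos n"
proof -
  let ?P = "\<lambda>i j::nat. i = j"
  have e: "matousek_outmap n (Am n X) (\<lambda>_. False) = matousek_outmap n (matmul n (matmul n ?P (Am n X)) (transp_mat ?P)) (\<lambda>_. False)"
    by (rule outmap_cong) (simp add: id_conj)
  have p: "perm_matrix n ?P" unfolding perm_matrix_def by auto
  have u: "upper_triangular n (Am n X)" unfolding upper_triangular_def Am_def by auto
  have iv: "invertible_mat n (Am n X)" unfolding invertible_mat_def
    using Am_square by blast
  have c: "(\<lambda>_. False) \<in> cube n" by (simp add: cube_def)
  show ?thesis unfolding matousek_usos_def mem_Collect_eq
    by (rule exI[of _ ?P], rule exI[of _ "Am n X"], rule exI[of _ "\<lambda>_. False"]) (use e p u iv c in simp)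
qed

lemma outmap_unit:
  assumes "i < n" "j < n"
  shows "matousek_outmap n M (\<lambda>_. False) (\<lambda>k. k = j) i = M i j"
proof -
  have c: "(\<lambda>k. k = j) \<in> cube n" using assms by (auto simp: cube_def)
  have "{k. k < n \<and> M i k \<and> vxor (\<lambda>k. k = j) (\<lambda>_. False) k} = (if M i j then {j} else {})"
    using assms by (auto simp: vxor_def)
  then show ?thesis using c assms by (simp add: matousek_outmap_def matvec_def)
qed

lemma Am_inj: "inj_on (\<lambda>X. matousek_outmap n (Am n X) (\<lambda>_. False))
    (Pow ({..<n div 2} \<times> {n div 2..<n}))"
proof (rule inj_onI)
  fix X Y
  assume X: "X \<in> Pow ({..<n div 2} \<times> {n div 2..<n})" and Y: "Y \<in> Pow ({..<n div 2} \<times> {n div 2..<n})"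
    and eq: "matousek_outmap n (Am n X) (\<lambda>_. False) = matousek_outmap n (Am n Y) (\<lambda>_. False)"
  have key: "Am n X i j = Am n Y i j" if "i < n" "j < n" for i j
    using outmap_unit[OF that, of "Am n X"] outmap_unit[OF that, of "Am n Y"] eq by simp
  show "X = Y"
  proof
    show "X \<subseteq> Y"
    proof
      fix p assume "p \<in> X"
      then obtain i j where p: "p = (i,j)" "i < n div 2" "n div 2 \<le> j" "j < n" using X by auto
      have "Am n X i j" using \<open>p \<in> X\<close> p by (simp add: Am_def)
      then have "Am n Y i j" using key p by simp
      then show "p \<in> Y" using p by (auto simp: Am_def)
    qed
  next
    show "Y \<subseteq> X"
    proof
      fix p assume "p \<in> Y"
      then obtain i j where p: "p = (i,j)" "i < n div 2" "n div 2 \<le> j" "j < n" using Y by auto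
      have "Am n Y i j" using \<open>p \<in> Y\<close> p by (simp add: Am_def)
      then have "Am n X i j" using key p by simp
      then show "p \<in> X" using p by (auto simp: Am_def)
    qed
  qed
qed

lemma usos_lower: "2 ^ ((n div 2) * (n - n div 2)) \<le> card (matousek_usos n)"
proof -
  have "2 ^ ((n div 2) * (n - n div 2)) = card (Pow ({..<n div 2} \<times> {n div 2..<n}))"
    by (simp add: card_Pow card_cartesian_product)
  also have "\<dots> = card ((\<lambda>X. matousek_outmap n (Am n X) (\<lambda>_. False)) ` (Pow ({..<n div 2} \<times> {n div 2..<n})))"
    using card_image[OF Am_inj] by simp
  also have "\<dots> \<le> card (matousek_usos n)"
    by (rule card_mono[OF usos_finite]) (use Am_in in blast)
  finally show ?thesis .
qed

lemma arith_lb: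
  assumes "n \<ge> 2"
  shows "real n ^ 2 / 8 \<le> real ((n div 2) * (n - n div 2))"
proof -
  define a where "a = n div 2"
  define b where "b = n - n div 2"
  have ha: "2 * real a \<ge> real n - 1" unfolding a_def by linarith
  have hb: "2 * real b \<ge> real n" unfolding b_def by linarith
  have "(real n - 1) * real n \<le> (2 * real a) * (2 * real b)"
    by (rule mult_mono) (use ha hb assms in auto)
  moreover have "real n ^ 2 / 2 \<le> (real n - 1) * real n"
  proof -
    have h: "0 \<le> real n * (real n - 2)" using assms by simp
    then show ?thesis unfolding power2_eq_square by (simp add: algebra_simps)
  qed
  moreover have "real ((n div 2) * (n - n div 2)) = real a * real b" by (simp add: a_def b_def)
  ultimately show ?thesis by linarith
qed

theorem lemma9:
  shows "(\<lambda>n. log 2 (real (card (matousek_usos n)))) \<in> \<Theta>(\<lambda>n. real n ^ 2)"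
proof -
  have pos: "real (card (matousek_usos n)) \<ge> 1" for n
  proof -
    have "(1::nat) \<le> 2 ^ ((n div 2) * (n - n div 2))" by simp
    also have "\<dots> \<le> card (matousek_usos n)" by (rule usos_lower)
    finally show ?thesis by simp
  qed
  have lg0: "log 2 (real (card (matousek_usos n))) \<ge> 0" for n
    using pos[of n] by simp
  have up: "log 2 (real (card (matousek_usos n))) \<le> 2 * real n ^ 2" if "n \<ge> 1" for n
  proof -
    have "real (card (matousek_usos n)) \<le> real ((2::nat) ^ (n*n+n))"
      using usos_upper[of n] by (simp only: power_add of_nat_le_iff)
    also have "\<dots> = (2::real) ^ (n*n+n)" by simp
    finally have "log 2 (real (card (matousek_usos n))) \<le> log 2 ((2::real) ^ (n*n+n))"
      using pos[of n] by (subst log_le_cancel_iff) auto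
    also have "\<dots> = real (n*n+n)" by simp
    also have "\<dots> \<le> 2 * real n ^ 2" using that by (simp add: power2_eq_square)
    finally show ?thesis .
  qed
  have low: "real n ^ 2 / 8 \<le> log 2 (real (card (matousek_usos n)))" if "n \<ge> 2" for n
  proof -
    have "real n ^ 2 / 8 \<le> real ((n div 2) * (n - n div 2))" by (rule arith_lb[OF that])
    also have "\<dots> = log 2 ((2::real) ^ ((n div 2) * (n - n div 2)))" by simp
    also have "\<dots> \<le> log 2 (real (card (matousek_usos n)))"
    proof (subst log_le_cancel_iff)
      have "(2::real) ^ ((n div 2) * (n - n div 2)) = real ((2::nat) ^ ((n div 2) * (n - n div 2)))"
        by simp
      also have "\<dots> \<le> real (card (matousek_usos n))" using usos_lower[of n] by linarith
      finally show "(2::real) ^ ((n div 2) * (n - n div 2)) \<le> real (card (matousek_usos n))" .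
    qed (use pos[of n] in auto)
    finally show ?thesis .
  qed
  show ?thesis
  proof (rule bigthetaI)
    show "(\<lambda>n. log 2 (real (card (matousek_usos n)))) \<in> O(\<lambda>n. real n ^ 2)"
      by (rule landau_o.bigI[of 2]) (use up lg0 in \<open>auto intro!: eventually_sequentiallyI[of 1]\<close>)
    show "(\<lambda>n. log 2 (real (card (matousek_usos n)))) \<in> \<Omega>(\<lambda>n. real n ^ 2)"
      by (rule landau_omega.bigI[of "1/8"]) (use low lg0 in \<open>auto intro!: eventually_sequentiallyI[of 2]\<close>)
  qed
qed

end
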